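(* Let $\omega_0(n)=(n+1)/\pi$ and consider $\mathcal T$ on $\mathcal X_{\omega_0}$. For $n\ge1$ and $0\le r\le3^n-1$ define finite sets $P^{(n)}_{k,r}\subset\mathbf Q[\xi]$ of polynomials of degree one by $P^{(n)}_{0,r}=\{3^n\xi+r\}$ and, for $k\ge0$, \[P^{(n)}_{k+1,r}=\{2P;\ P\in P^{(n)}_{k,r}\}\cup\{(2P-1)/3;\ P\in P^{(n)}_{k,r},\ P(0)\equiv2\bmod 3\}.\] Then for every $n\ge1$, \[\|\mathcal T^n\|^2=\max_{0\le r\le3^n-1}\ \sum_{a\xi+b\in P^{(n)}_{n,r}}\frac{a}{3^n}.\]
   Context: $T\colon\mathbf Z_+\to\mathbf Z_+$ is the modified Collatz map: $T(n)=n/2$ for $n$ even, $T(n)=(3n+1)/2$ for $n$ odd. $\mathcal X_{\omega_0}$ is the Hilbert space of holomorphic functions $f(z)=\sum_{n\ge3}c_nz^n$ on the unit disk with $\|f\|^2=\sum_{n\ge3}\pi|c_n|^2/(n+1)<\infty$ (the Bergman space modulo $\mathrm{span}[1,z,z^2]$). $\mathcal T\sum_{n\ge3}c_nz^n=\sum_{j\ge3,\,T(j)\ge3}c_jz^{T(j)}$, a bounded operator on $\mathcal X_{\omega_0}$; $\|\cdot\|$ is its operator norm. *)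

theory Defs
  imports "HOL-Analysis.Analysis" "HOL-Computational_Algebra.Polynomial"
begin

definition collatzT :: "nat \<Rightarrow> nat" where
  "collatzT n = (if even n then n div 2 else (3 * n + 1) div 2)"

text \<open>Elements of X_omega0 are represented by their Taylor coefficient sequences
  c with c n = 0 for n < 3 and sum of pi |c n|^2/(n+1) finite.\<close>
definition Xspace :: "(nat \<Rightarrow> complex) set" where
  "Xspace = {c. (\<forall>n<3. c n = 0) \<and> summable (\<lambda>n. pi * (cmod (c n))\<^sup>2 / (real n + 1))}"

definition Xnorm :: "(nat \<Rightarrow> complex) \<Rightarrow> real" where
  "Xnorm c = sqrt (\<Sum>n. pi * (cmod (c n))\<^sup>2 / (real n + 1))"

text \<open>The operator: sum_{j>=3, T j >= 3} c_j z^{T j}; coefficient of z^m.\<close>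
definition Top :: "(nat \<Rightarrow> complex) \<Rightarrow> (nat \<Rightarrow> complex)" where
  "Top c = (\<lambda>m. if m < 3 then 0 else (\<Sum>j\<in>{j. 3 \<le> j \<and> collatzT j = m}. c j))"

definition Top_pow_norm :: "nat \<Rightarrow> real" where
  "Top_pow_norm k = Sup {Xnorm ((Top ^^ k) c) | c. c \<in> Xspace \<and> Xnorm c \<le> 1}"

fun Pset :: "nat \<Rightarrow> nat \<Rightarrow> nat \<Rightarrow> rat poly set" where
  "Pset n 0 r = {[: of_nat r, 3 ^ n :]}"
| "Pset n (Suc k) r =
     (\<lambda>P. smult 2 P) ` Pset n k r \<union>
     (\<lambda>P. smult (1/3) (smult 2 P - 1)) `
        {P \<in> Pset n k r. \<exists>m::int. poly P 0 = of_int (3 * m + 2)}"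

end

theory Submission
  imports Defs
begin

abbreviation TT where "TT \<equiv> collatzT"

lemma T_ge: "j \<le> 2 * collatzT j"
  unfolding collatzT_def by auto

lemma T_le: "2 * (collatzT j + 1) \<le> 3 * (j + 1)"
  unfolding collatzT_def by auto

lemma Tpow_ge: "j \<le> 2 ^ k * (collatzT ^^ k) j"
proof (induction k arbitrary: j)
  case 0 then show ?case by simp
next
  case (Suc k)
  have "j \<le> 2 ^ k * (collatzT ^^ k) j" by (rule Suc)
  also have "(collatzT ^^ k) j \<le> 2 * collatzT ((collatzT ^^ k) j)" by (rule T_ge)
  finally show ?case by (simp add: mult.assoc mult.left_commute)
qed

lemma Tpow_le: "2 ^ k * ((collatzT ^^ k) j + 1) \<le> 3 ^ k * (j + 1)"
proof (induction k)
  case 0 then show ?case by simp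
next
  case (Suc k)
  have "2 ^ Suc k * ((collatzT ^^ Suc k) j + 1) = 2 ^ k * (2 * (collatzT ((collatzT ^^ k) j) + 1))"
    by simp
  also have "\<dots> \<le> 2 ^ k * (3 * ((collatzT ^^ k) j + 1))"
    using T_le by (intro mult_left_mono) auto
  also have "\<dots> = 3 * (2 ^ k * ((collatzT ^^ k) j + 1))" by (simp add: algebra_simps)
  also have "\<dots> \<le> 3 * (3 ^ k * (j + 1))" using Suc by simp
  finally show ?case by simp
qed

fun Q :: "nat \<Rightarrow> nat \<Rightarrow> nat \<Rightarrow> (nat \<times> nat) set" where
  "Q n 0 r = {(3 ^ n, r)}"
| "Q n (Suc k) r = (\<lambda>(a, b). (2 * a, 2 * b)) ` Q n k r \<union>
     (\<lambda>(a, b). (2 * a div 3, (2 * b - 1) div 3)) ` {(a, b) \<in> Q n k r. b mod 3 = 2}"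

lemma Q_finite: "finite (Q n k r)"
proof (induction k)
  case (Suc k)
  have "finite {(a, b) \<in> Q n k r. b mod 3 = 2}"
    by (rule finite_subset[OF _ Suc]) auto
  then show ?case using Suc by simp
qed simp

lemma Q_inv: "k \<le> n \<Longrightarrow> (a, b) \<in> Q n k r \<Longrightarrow>
   3 ^ (n - k) dvd a \<and> 3 ^ n * (b + 1) \<le> a * (r + 1) \<and> 0 < a"
proof (induction k arbitrary: a b)
  case 0 then show ?case by simp
next
  case (Suc k)
  from Suc.prems(2) consider (e) a0 b0 where "(a0, b0) \<in> Q n k r" "a = 2 * a0" "b = 2 * b0"
    | (o) a0 b0 where "(a0, b0) \<in> Q n k r" "b0 mod 3 = 2" "a = 2 * a0 div 3" "b = (2 * b0 - 1) div 3"
    by auto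
  then show ?case
  proof cases
    case e
    with Suc.IH[of a0 b0] Suc.prems have ih: "3 ^ (n - k) dvd a0" "3 ^ n * (b0 + 1) \<le> a0 * (r + 1)" "0 < a0" by auto
    have "n - k = Suc (n - Suc k)" using Suc.prems(1) by simp
    then have "(3::nat) ^ (n - k) = 3 * 3 ^ (n - Suc k)" by simp
    then have "3 ^ (n - Suc k) dvd a0" using ih(1) dvd_mult_right by metis
    moreover have "3 ^ n * (2 * b0 + 1) \<le> 2 * a0 * (r + 1)"
      using ih(2) by (simp add: algebra_simps)
    ultimately show ?thesis using e ih by auto
  next
    case o
    with Suc.IH[of a0 b0] Suc.prems have ih: "3 ^ (n - k) dvd a0" "3 ^ n * (b0 + 1) \<le> a0 * (r + 1)" "0 < a0" by auto
    have nk: "n - k = Suc (n - Suc k)" using Suc.prems(1) by simp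
    obtain t where t: "a0 = 3 ^ (n - k) * t" using ih(1) by (auto elim: dvdE)
    define a1 where "a1 = 3 ^ (n - Suc k) * t"
    have a1: "a0 = 3 * a1" "3 ^ (n - Suc k) dvd a1" using t nk unfolding a1_def by auto
    have "b0 = 3 * (b0 div 3) + 2" using o(2) by presburger
    then obtain b1 where b1: "b0 = 3 * b1 + 2" by blast
    have aa: "a = 2 * a1" using o a1 by simp
    have bb: "b = 2 * b1 + 1" using o b1 by simp
    have "3 * (3 ^ n * (b1 + 1)) \<le> 3 * (a1 * (r + 1))" using ih(2) a1 b1 by (simp add: algebra_simps)
    then have "3 ^ n * (b1 + 1) \<le> a1 * (r + 1)" by simp
    then have "3 ^ n * (b + 1) \<le> a * (r + 1)" using aa bb by (simp add: algebra_simps)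
    then show ?thesis using aa a1 ih by auto
  qed
qed


lemma rat_mod3: "(\<exists>m::int. (of_nat b :: rat) = of_int (3 * m + 2)) \<longleftrightarrow> b mod 3 = 2"
proof
  assume "\<exists>m::int. (of_nat b :: rat) = of_int (3 * m + 2)"
  then obtain m :: int where "(of_nat b :: rat) = of_int (3 * m + 2)" by blast
  then have "int b = 3 * m + 2" by (metis of_int_eq_iff of_int_of_nat_eq)
  then have "int b mod 3 = 2" by presburger
  then show "b mod 3 = 2" by presburger
next
  assume "b mod 3 = 2"
  then have "int b = 3 * int (b div 3) + 2" by presburger
  then have "(of_nat b :: rat) = of_int (3 * int (b div 3) + 2)" by (metis of_int_of_nat_eq)
  then show "\<exists>m::int. (of_nat b :: rat) = of_int (3 * m + 2)" by blast
qed

definition toP :: "nat \<times> nat \<Rightarrow> rat poly" where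
  "toP p = [: of_nat (snd p), of_nat (fst p) :]"

lemma toP_inj: "inj toP"
  unfolding toP_def inj_def by auto

lemma Pset_Q: "k \<le> n \<Longrightarrow> Pset n k r = toP ` Q n k r"
proof (induction k)
  case 0 then show ?case by (simp add: toP_def)
next
  case (Suc k)
  then have IH: "Pset n k r = toP ` Q n k r" by simp
  have e: "(\<lambda>P. smult 2 P) ` Pset n k r = toP ` ((\<lambda>(a, b). (2 * a, 2 * b)) ` Q n k r)"
    unfolding IH image_image by (rule image_cong) (auto simp: toP_def)
  have f: "{P \<in> Pset n k r. \<exists>m::int. poly P 0 = of_int (3 * m + 2)} = toP ` {(a, b) \<in> Q n k r. b mod 3 = 2}"
  proof -
    have c: "(\<exists>m::int. poly (toP p) 0 = of_int (3 * m + 2)) \<longleftrightarrow> snd p mod 3 = 2" for p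
    proof -
      have "poly (toP p) 0 = of_nat (snd p)" by (simp add: toP_def)
      then show ?thesis by (simp only: rat_mod3)
    qed
    show ?thesis unfolding IH
    proof (intro set_eqI iffI)
      fix P assume "P \<in> {P \<in> toP ` Q n k r. \<exists>m::int. poly P 0 = of_int (3 * m + 2)}"
      then obtain p where p: "p \<in> Q n k r" "P = toP p" "\<exists>m::int. poly (toP p) 0 = of_int (3 * m + 2)" by blast
      then have "snd p mod 3 = 2" using c by blast
      then have "p \<in> {(a, b) \<in> Q n k r. b mod 3 = 2}" using p(1) by (cases p) auto
      then show "P \<in> toP ` {(a, b) \<in> Q n k r. b mod 3 = 2}" using p(2) by blast
    next
      fix P assume "P \<in> toP ` {(a, b) \<in> Q n k r. b mod 3 = 2}"
      then obtain p where p: "p \<in> Q n k r" "P = toP p" "snd p mod 3 = 2" by auto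
      then have "\<exists>m::int. poly (toP p) 0 = of_int (3 * m + 2)" using c by blast
      then show "P \<in> {P \<in> toP ` Q n k r. \<exists>m::int. poly P 0 = of_int (3 * m + 2)}" using p by blast
    qed
  qed
  have g: "(\<lambda>P. smult (1/3) (smult 2 P - 1)) ` toP ` {(a, b) \<in> Q n k r. b mod 3 = 2}
     = toP ` (\<lambda>(a, b). (2 * a div 3, (2 * b - 1) div 3)) ` {(a, b) \<in> Q n k r. b mod 3 = 2}"
    unfolding image_image
  proof (rule image_cong[OF refl])
    fix p assume p: "p \<in> {(a, b) \<in> Q n k r. b mod 3 = 2}"
    obtain a b where ab: "p = (a, b)" by fastforce
    have "3 ^ (n - k) dvd a" using Q_inv[of k n a b r] p ab Suc.prems by auto
    moreover have "(3::nat) dvd 3 ^ (n - k)" using Suc.prems by simp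
    ultimately obtain a1 where a1: "a = 3 * a1" by (meson dvd_trans dvdE)
    have "b mod 3 = 2" using p ab by simp
    then have "b = 3 * (b div 3) + 2" by presburger
    then obtain b1 where b1: "b = 3 * b1 + 2" by blast
    have x: "2 * a div 3 = 2 * a1" "(2 * b - 1) div 3 = 2 * b1 + 1" using a1 b1 by auto
    show "smult (1/3) (smult 2 (toP p) - 1) = toP ((\<lambda>(a, b). (2 * a div 3, (2 * b - 1) div 3)) p)"
      unfolding ab toP_def using x a1 b1 by (simp add: one_pCons field_simps)
  qed
  have "Pset n (Suc k) r = (\<lambda>P. smult 2 P) ` Pset n k r \<union>
     (\<lambda>P. smult (1/3) (smult 2 P - 1)) ` {P \<in> Pset n k r. \<exists>m::int. poly P 0 = of_int (3 * m + 2)}"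
    by (simp only: Pset.simps)
  also have "\<dots> = toP ` ((\<lambda>(a, b). (2 * a, 2 * b)) ` Q n k r) \<union>
     toP ` (\<lambda>(a, b). (2 * a div 3, (2 * b - 1) div 3)) ` {(a, b) \<in> Q n k r. b mod 3 = 2}"
    by (simp only: e f g)
  also have "\<dots> = toP ` Q n (Suc k) r" by (simp add: image_Un)
  finally show ?case .
qed

lemma T_even: "collatzT (2 * i) = i"
  unfolding collatzT_def by simp

lemma T_odd: "collatzT (2 * i + 1) = 3 * i + 2"
proof -
  have "3 * (2 * i + 1) + 1 = 2 * (3 * i + 2)" by simp
  then show ?thesis unfolding collatzT_def by simp
qed

lemma Q_image: "k \<le> n \<Longrightarrow> (\<lambda>(a, b). a * x + b) ` Q n k r = {j. (collatzT ^^ k) j = 3 ^ n * x + r}"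
proof (induction k)
  case 0 then show ?case by auto
next
  case (Suc k)
  then have IH: "(\<lambda>(a, b). a * x + b) ` Q n k r = {j. (collatzT ^^ k) j = 3 ^ n * x + r}" by simp
  have d3: "3 dvd a" if "(a, b) \<in> Q n k r" for a b
  proof -
    have "3 ^ (n - k) dvd a" using Q_inv[of k n a b r] that Suc.prems by auto
    moreover have "(3::nat) dvd 3 ^ (n - k)" using Suc.prems by simp
    ultimately show ?thesis by (meson dvd_trans)
  qed
  have inU: "a * x + b \<in> {j. (collatzT ^^ k) j = 3 ^ n * x + r}" if "(a, b) \<in> Q n k r" for a b
    using IH that by (metis (no_types, lifting) case_prod_conv image_eqI)
  have Uiff: "j \<in> {j. (collatzT ^^ Suc k) j = 3 ^ n * x + r} \<longleftrightarrow>
      collatzT j \<in> {j. (collatzT ^^ k) j = 3 ^ n * x + r}" for j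
    by (simp only: funpow_Suc_right o_apply mem_Collect_eq)
  show ?case
  proof (intro set_eqI iffI)
    fix j assume "j \<in> (\<lambda>(a, b). a * x + b) ` Q n (Suc k) r"
    then obtain p where p: "p \<in> Q n (Suc k) r" "j = (\<lambda>(a, b). a * x + b) p" by blast
    from p(1) have "p \<in> (\<lambda>(a, b). (2 * a, 2 * b)) ` Q n k r \<or>
       p \<in> (\<lambda>(a, b). (2 * a div 3, (2 * b - 1) div 3)) ` {(a, b) \<in> Q n k r. b mod 3 = 2}"
      by (simp only: Q.simps Un_iff)
    then show "j \<in> {j. (collatzT ^^ Suc k) j = 3 ^ n * x + r}"
    proof
      assume "p \<in> (\<lambda>(a, b). (2 * a, 2 * b)) ` Q n k r"
      then obtain a b where ab: "(a, b) \<in> Q n k r" "p = (2 * a, 2 * b)" by auto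
      have "j = 2 * (a * x + b)" using p(2) ab(2) by (simp add: algebra_simps)
      then have "collatzT j = a * x + b" by (simp only: T_even)
      then show ?thesis using Uiff inU[OF ab(1)] by simp
    next
      assume "p \<in> (\<lambda>(a, b). (2 * a div 3, (2 * b - 1) div 3)) ` {(a, b) \<in> Q n k r. b mod 3 = 2}"
      then obtain a b where ab: "(a, b) \<in> Q n k r" "b mod 3 = 2" "p = (2 * a div 3, (2 * b - 1) div 3)" by auto
      obtain a1 where a1: "a = 3 * a1" using d3[OF ab(1)] by (rule dvdE)
      have "b = 3 * (b div 3) + 2" using ab(2) by presburger
      then obtain b1 where b1: "b = 3 * b1 + 2" by blast
      have "2 * a div 3 = 2 * a1" "(2 * b - 1) div 3 = 2 * b1 + 1" using a1 b1 by auto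
      then have "j = 2 * (a1 * x + b1) + 1" using p(2) ab(3) by (simp add: algebra_simps)
      then have "collatzT j = 3 * (a1 * x + b1) + 2" by (simp only: T_odd)
      also have "\<dots> = a * x + b" using a1 b1 by (simp add: algebra_simps)
      finally show ?thesis using Uiff inU[OF ab(1)] by simp
    qed
  next
    fix j assume "j \<in> {j. (collatzT ^^ Suc k) j = 3 ^ n * x + r}"
    then have "collatzT j \<in> {j. (collatzT ^^ k) j = 3 ^ n * x + r}" using Uiff by blast
    then have "collatzT j \<in> (\<lambda>(a, b). a * x + b) ` Q n k r" using IH by simp
    then obtain a b where ab: "(a, b) \<in> Q n k r" "collatzT j = a * x + b" by auto
    have QS: "Q n (Suc k) r = (\<lambda>(a, b). (2 * a, 2 * b)) ` Q n k r \<union>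
       (\<lambda>(a, b). (2 * a div 3, (2 * b - 1) div 3)) ` {(a, b) \<in> Q n k r. b mod 3 = 2}"
      by (simp only: Q.simps)
    show "j \<in> (\<lambda>(a, b). a * x + b) ` Q n (Suc k) r"
    proof (cases "even j")
      case True
      then obtain i where i: "j = 2 * i" by blast
      then have "i = a * x + b" using ab(2) T_even by simp
      then have j: "j = (2 * a) * x + 2 * b" using i by (simp add: algebra_simps)
      have "(2 * a, 2 * b) \<in> Q n (Suc k) r" unfolding QS using ab(1)
        by (intro UnI1 image_eqI[where x = "(a, b)"]) auto
      then show ?thesis using j by force
    next
      case False
      then obtain i where i: "j = 2 * i + 1" using oddE by blast
      then have ci: "3 * i + 2 = a * x + b" using ab(2) T_odd by simp
      obtain a1 where a1: "a = 3 * a1" using d3[OF ab(1)] by (rule dvdE)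
      have "3 * i + 2 = 3 * (a1 * x) + b" using ci a1 by simp
      then have bm: "b mod 3 = 2" by presburger
      have "b = 3 * (b div 3) + 2" using bm by presburger
      then obtain b1 where b1: "b = 3 * b1 + 2" by blast
      have "3 * i + 2 = 3 * (a1 * x + b1) + 2" using ci a1 b1 by (simp add: algebra_simps)
      then have "i = a1 * x + b1" by simp
      then have j: "j = (2 * a div 3) * x + (2 * b - 1) div 3" using i a1 b1 by (simp add: algebra_simps)
      have "(2 * a div 3, (2 * b - 1) div 3) \<in> Q n (Suc k) r" unfolding QS using ab(1) bm
        by (intro UnI2 image_eqI[where x = "(a, b)"]) auto
      then show ?thesis using j by force
    qed
  qed
qed

definition Sset :: "nat \<Rightarrow> nat \<Rightarrow> nat set" where
  "Sset k m = {j. (\<forall>i\<le>k. 3 \<le> (collatzT ^^ i) j) \<and> (collatzT ^^ k) j = m}"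

lemma Sset_sub: "Sset k m \<subseteq> {..2 ^ k * m}"
  unfolding Sset_def using Tpow_ge by fastforce

lemma Sset_finite: "finite (Sset k m)"
  using Sset_sub finite_subset by blast

lemma pre_finite: "finite {j. 3 \<le> j \<and> collatzT j = m}"
proof (rule finite_subset)
  show "{j. 3 \<le> j \<and> collatzT j = m} \<subseteq> {..2 * m}" using T_ge by fastforce
qed simp

lemma Sset_ge3:
  assumes "j \<in> Sset k m" shows "3 \<le> j"
proof -
  have "3 \<le> (collatzT ^^ 0) j" using assms unfolding Sset_def by blast
  then show ?thesis by simp
qed

lemma Sset_U: "j \<in> Sset k m \<Longrightarrow> (collatzT ^^ k) j = m"
  unfolding Sset_def by auto

lemma Top_pow: "(\<forall>i<3. c i = 0) \<Longrightarrow> (Top ^^ k) c m = (\<Sum>j\<in>Sset k m. c j)"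
proof (induction k arbitrary: m)
  case 0
  show ?case
  proof (cases "m < 3")
    case True
    then have "Sset 0 m = {}" unfolding Sset_def by auto
    then show ?thesis using True 0 by simp
  next
    case False
    then have "Sset 0 m = {m}" unfolding Sset_def by auto
    then show ?thesis by simp
  qed
next
  case (Suc k)
  show ?case
  proof (cases "m < 3")
    case True
    then have "Sset (Suc k) m = {}" unfolding Sset_def by fastforce
    then show ?thesis using True by (simp add: Top_def)
  next
    case False
    have "(Top ^^ Suc k) c m = (\<Sum>i\<in>{j. 3 \<le> j \<and> collatzT j = m}. (Top ^^ k) c i)"
      using False by (simp add: Top_def)
    also have "\<dots> = (\<Sum>i\<in>{j. 3 \<le> j \<and> collatzT j = m}. \<Sum>j\<in>Sset k i. c j)"
      using Suc by simp
    also have "\<dots> = (\<Sum>i\<in>{j. 3 \<le> j \<and> collatzT j = m}. \<Sum>j\<in>{x. x \<in> Sset (Suc k) m \<and> (collatzT ^^ k) x = i}. c j)"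
    proof (rule sum.cong[OF refl])
      fix i assume i: "i \<in> {j. 3 \<le> j \<and> collatzT j = m}"
      have "Sset k i = {x. x \<in> Sset (Suc k) m \<and> (collatzT ^^ k) x = i}"
      proof (intro set_eqI iffI)
        fix x assume x: "x \<in> Sset k i"
        then have "(collatzT ^^ k) x = i" "\<forall>i'\<le>k. 3 \<le> (collatzT ^^ i') x" unfolding Sset_def by auto
        moreover have "\<forall>i'\<le>Suc k. 3 \<le> (collatzT ^^ i') x"
          using calculation i False by (auto simp: le_Suc_eq)
        ultimately show "x \<in> {x. x \<in> Sset (Suc k) m \<and> (collatzT ^^ k) x = i}"
          using i unfolding Sset_def by auto
      next
        fix x assume "x \<in> {x. x \<in> Sset (Suc k) m \<and> (collatzT ^^ k) x = i}"
        then show "x \<in> Sset k i" unfolding Sset_def by auto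
      qed
      then show "(\<Sum>j\<in>Sset k i. c j) = (\<Sum>j\<in>{x. x \<in> Sset (Suc k) m \<and> (collatzT ^^ k) x = i}. c j)"
        by simp
    qed
    also have "\<dots> = (\<Sum>j\<in>Sset (Suc k) m. c j)"
    proof (rule sum.group[OF Sset_finite pre_finite])
      show "(collatzT ^^ k) ` Sset (Suc k) m \<subseteq> {j. 3 \<le> j \<and> collatzT j = m}"
        unfolding Sset_def by auto
    qed
    finally show ?thesis .
  qed
qed

definition Lf :: "nat \<Rightarrow> nat \<Rightarrow> real" where
  "Lf n r = (\<Sum>P\<in>Pset n n r. real_of_rat (coeff P 1) / 3 ^ n)"

lemma Lf_Q: "Lf n r = (\<Sum>p\<in>Q n n r. real (fst p) / 3 ^ n)"
proof -
  have "Lf n r = (\<Sum>P\<in>toP ` Q n n r. real_of_rat (coeff P 1) / 3 ^ n)"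
    unfolding Lf_def using Pset_Q[of n n r] by simp
  also have "\<dots> = (\<Sum>p\<in>Q n n r. real_of_rat (coeff (toP p) 1) / 3 ^ n)"
    by (subst sum.reindex) (use toP_inj inj_on_subset in auto)
  also have "\<dots> = (\<Sum>p\<in>Q n n r. real (fst p) / 3 ^ n)"
    by (simp add: toP_def)
  finally show ?thesis .
qed

lemma W_upper:
  assumes m3: "3 \<le> m"
  shows "(\<Sum>j\<in>Sset n m. real j + 1) \<le> Lf n (m mod 3 ^ n) * (real m + 1)"
proof -
  define r where "r = m mod 3 ^ n"
  define x where "x = m div 3 ^ n"
  have mx: "m = 3 ^ n * x + r" unfolding r_def x_def by simp
  let ?phi = "\<lambda>(a, b). a * x + b"
  have sub: "Sset n m \<subseteq> ?phi ` Q n n r"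
    using Q_image[of n n x r] mx Sset_U by auto
  have "(\<Sum>j\<in>Sset n m. real j + 1) \<le> (\<Sum>j\<in>?phi ` Q n n r. real j + 1)"
    by (rule sum_mono2) (use sub Q_finite in auto)
  also have "\<dots> \<le> (\<Sum>p\<in>Q n n r. real (?phi p) + 1)"
    using sum_image_le[of "Q n n r" "\<lambda>j. real j + 1" ?phi] Q_finite by (simp add: o_def)
  also have "\<dots> \<le> (\<Sum>p\<in>Q n n r. real (fst p) / 3 ^ n * (real m + 1))"
  proof (rule sum_mono)
    fix p assume p: "p \<in> Q n n r"
    obtain a b where ab: "p = (a, b)" by fastforce
    have inv: "3 ^ n * (b + 1) \<le> a * (r + 1)" using Q_inv[of n n a b r] p ab by auto
    have "3 ^ n * (a * x + b + 1) \<le> a * (m + 1)"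
      using inv unfolding mx by (simp add: algebra_simps)
    then have "real (3 ^ n * (a * x + b + 1)) \<le> real (a * (m + 1))" by (simp only: of_nat_le_iff)
    then have h: "(real (a * x + b) + 1) * 3 ^ n \<le> real a * (real m + 1)" by (simp add: algebra_simps)
    have "real (a * x + b) + 1 \<le> real a * (real m + 1) / 3 ^ n"
      using h by (subst pos_le_divide_eq) auto
    then show "real (?phi p) + 1 \<le> real (fst p) / 3 ^ n * (real m + 1)"
      unfolding ab by simp
  qed
  also have "\<dots> = Lf n r * (real m + 1)"
    unfolding Lf_Q by (simp add: sum_distrib_right)
  finally show ?thesis unfolding r_def .
qed


lemma Sset_small: "m < 3 \<Longrightarrow> Sset k m = {}"
  unfolding Sset_def by fastforce

lemma Sset_disj: "m \<noteq> m' \<Longrightarrow> Sset k m \<inter> Sset k m' = {}"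
  unfolding Sset_def by auto

lemma Lf_le_L: "Lf n (m mod 3 ^ n) \<le> Max (Lf n ` {0..3 ^ n - 1})"
proof (rule Max_ge)
  have "m mod 3 ^ n < 3 ^ n" by simp
  then have "m mod 3 ^ n \<le> 3 ^ n - 1" by linarith
  then show "Lf n (m mod 3 ^ n) \<in> Lf n ` {0..3 ^ n - 1}" by (intro imageI) simp
qed simp

lemma L_nonneg: "0 \<le> Max (Lf n ` {0..3 ^ n - 1})"
proof -
  have "0 \<le> Lf n 0" unfolding Lf_Q by (auto intro: sum_nonneg)
  also have "\<dots> \<le> Max (Lf n ` {0..3 ^ n - 1})" using Lf_le_L[of n 0] by simp
  finally show ?thesis .
qed

lemma CS_step:
  fixes S :: "nat set"
  shows "(\<Sum>j\<in>S. cmod (c j))\<^sup>2 \<le> (\<Sum>j\<in>S. real j + 1) * (\<Sum>j\<in>S. (cmod (c j))\<^sup>2 / (real j + 1))"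
proof -
  have "(\<Sum>j\<in>S. cmod (c j)) = (\<Sum>j\<in>S. sqrt (real j + 1) * (cmod (c j) / sqrt (real j + 1)))"
    by (rule sum.cong) auto
  also have "(\<dots>)\<^sup>2 \<le> (\<Sum>j\<in>S. (sqrt (real j + 1))\<^sup>2) * (\<Sum>j\<in>S. (cmod (c j) / sqrt (real j + 1))\<^sup>2)"
    by (rule Cauchy_Schwarz_ineq_sum)
  also have "\<dots> = (\<Sum>j\<in>S. real j + 1) * (\<Sum>j\<in>S. (cmod (c j))\<^sup>2 / (real j + 1))"
    by (simp add: power_divide)
  finally show ?thesis .
qed

lemma norm_upper:
  assumes c: "c \<in> Xspace" "Xnorm c \<le> 1"
  shows "Xnorm ((Top ^^ n) c) \<le> sqrt (Max (Lf n ` {0..3 ^ n - 1}))"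
proof -
  define L where "L = Max (Lf n ` {0..3 ^ n - 1})"
  have L0: "0 \<le> L" unfolding L_def by (rule L_nonneg)
  define f where "f j = pi * (cmod (c j))\<^sup>2 / (real j + 1)" for j
  define d where "d = (Top ^^ n) c"
  define g where "g m = pi * (cmod (d m))\<^sup>2 / (real m + 1)" for m
  have c0: "\<forall>i<3. c i = 0" and sf: "summable f" using c(1) unfolding Xspace_def f_def by auto
  have f0: "0 \<le> f j" for j unfolding f_def by auto
  have "sqrt (suminf f) \<le> 1" using c(2) unfolding Xnorm_def f_def .
  then have sf1: "suminf f \<le> 1" by simp
  have dm: "d m = (\<Sum>j\<in>Sset n m. c j)" for m unfolding d_def using Top_pow[OF c0] .
  have gle: "g m \<le> L * (\<Sum>j\<in>Sset n m. f j)" for m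
  proof (cases "m < 3")
    case True
    then show ?thesis unfolding g_def dm using Sset_small[OF True] by simp
  next
    case False
    have "cmod (d m) \<le> (\<Sum>j\<in>Sset n m. cmod (c j))" unfolding dm by (rule norm_sum)
    then have "(cmod (d m))\<^sup>2 \<le> (\<Sum>j\<in>Sset n m. cmod (c j))\<^sup>2"
      by (simp add: power_mono)
    also have "\<dots> \<le> (\<Sum>j\<in>Sset n m. real j + 1) * (\<Sum>j\<in>Sset n m. (cmod (c j))\<^sup>2 / (real j + 1))"
      by (rule CS_step)
    also have "\<dots> \<le> (L * (real m + 1)) * (\<Sum>j\<in>Sset n m. (cmod (c j))\<^sup>2 / (real j + 1))"
    proof (rule mult_right_mono)
      have "(\<Sum>j\<in>Sset n m. real j + 1) \<le> Lf n (m mod 3 ^ n) * (real m + 1)"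
        using W_upper False by simp
      also have "\<dots> \<le> L * (real m + 1)" unfolding L_def
        by (rule mult_right_mono[OF Lf_le_L]) auto
      finally show "(\<Sum>j\<in>Sset n m. real j + 1) \<le> L * (real m + 1)" .
    qed (auto intro: sum_nonneg)
    finally have "(cmod (d m))\<^sup>2 \<le> L * (real m + 1) * (\<Sum>j\<in>Sset n m. (cmod (c j))\<^sup>2 / (real j + 1))" .
    then have "pi * (cmod (d m))\<^sup>2 / (real m + 1) \<le> pi * (L * (real m + 1) * (\<Sum>j\<in>Sset n m. (cmod (c j))\<^sup>2 / (real j + 1))) / (real m + 1)"
      by (intro divide_right_mono mult_left_mono) auto
    also have "\<dots> = L * (\<Sum>j\<in>Sset n m. f j)"
      unfolding f_def by (simp add: sum_distrib_left field_simps)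
    finally show ?thesis unfolding g_def .
  qed
  have g0: "0 \<le> g m" for m unfolding g_def by auto
  have inner: "(\<Sum>m<M. \<Sum>j\<in>Sset n m. f j) \<le> 1" for M
  proof -
    have "(\<Sum>m<M. \<Sum>j\<in>Sset n m. f j) = sum f (\<Union>m\<in>{..<M}. Sset n m)"
      by (rule sum.UNION_disjoint[symmetric]) (auto simp: Sset_finite Sset_disj)
    also have "\<dots> \<le> sum f {..<2 ^ n * M + 1}"
    proof (rule sum_mono2)
      show "(\<Union>m\<in>{..<M}. Sset n m) \<subseteq> {..<2 ^ n * M + 1}"
      proof
        fix j assume "j \<in> (\<Union>m\<in>{..<M}. Sset n m)"
        then obtain m where "m < M" "j \<in> Sset n m" by auto
        then have "j \<le> 2 ^ n * m" using Sset_sub by auto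
        also have "\<dots> \<le> 2 ^ n * M" using \<open>m < M\<close> by simp
        finally show "j \<in> {..<2 ^ n * M + 1}" by simp
      qed
    qed (auto simp: f0)
    also have "\<dots> \<le> suminf f" by (rule sum_le_suminf[OF sf]) (auto simp: f0)
    also have "\<dots> \<le> 1" by (rule sf1)
    finally show ?thesis .
  qed
  have partial: "(\<Sum>m<M. g m) \<le> L" for M
  proof -
    have "(\<Sum>m<M. g m) \<le> (\<Sum>m<M. L * (\<Sum>j\<in>Sset n m. f j))"
      by (rule sum_mono) (rule gle)
    also have "\<dots> = L * (\<Sum>m<M. \<Sum>j\<in>Sset n m. f j)" by (simp add: sum_distrib_left)
    also have "\<dots> \<le> L * 1" using inner[of M] L0 by (rule mult_left_mono)
    finally show ?thesis by simp
  qed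
  have sg: "summable g" by (rule summableI_nonneg_bounded[OF g0 partial])
  have "suminf g \<le> L" by (rule suminf_le_const[OF sg partial])
  then have "sqrt (suminf g) \<le> sqrt L" by simp
  then show ?thesis unfolding Xnorm_def L_def d_def g_def .
qed


lemma Q_nonempty: "Q n k r \<noteq> {}"
  by (induction k) auto

lemma image_in_Sset:
  assumes x4: "4 \<le> x" and j: "(collatzT ^^ n) j = 3 ^ n * x + r"
  shows "j \<in> Sset n (3 ^ n * x + r)"
  unfolding Sset_def
proof (intro CollectI conjI allI impI)
  fix i assume i: "i \<le> n"
  have e: "(collatzT ^^ (n - i)) ((collatzT ^^ i) j) = 3 ^ n * x + r"
  proof -
    have "(collatzT ^^ (n - i)) ((collatzT ^^ i) j) = (collatzT ^^ (n - i + i)) j"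
      by (simp add: funpow_add)
    also have "n - i + i = n" using i by simp
    finally show ?thesis using j by simp
  qed
  have "2 ^ (n - i) * (3 ^ n * x + r + 1) \<le> 3 ^ (n - i) * ((collatzT ^^ i) j + 1)"
    using Tpow_le[of "n - i" "(collatzT ^^ i) j"] e by simp
  moreover have "3 ^ (n - i) * 4 \<le> 2 ^ (n - i) * (3 ^ n * x + r + 1)"
  proof -
    have "(3::nat) ^ (n - i) \<le> 3 ^ n" by (rule power_increasing) auto
    then have "3 ^ (n - i) * 4 \<le> 3 ^ n * x" using x4 by (intro mult_mono) auto
    also have "\<dots> \<le> 1 * (3 ^ n * x + r + 1)" by simp
    also have "\<dots> \<le> 2 ^ (n - i) * (3 ^ n * x + r + 1)" by (intro mult_right_mono) auto
    finally show ?thesis .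
  qed
  ultimately have "3 ^ (n - i) * 4 \<le> 3 ^ (n - i) * ((collatzT ^^ i) j + 1)" by linarith
  then have "4 \<le> (collatzT ^^ i) j + 1" by simp
  then show "3 \<le> (collatzT ^^ i) j" by simp
qed (rule j)

lemma W_lower:
  assumes x4: "4 \<le> x" and xb: "\<forall>p\<in>Q n n r. snd p < x"
  shows "real x * (\<Sum>p\<in>Q n n r. real (fst p)) \<le> (\<Sum>j\<in>Sset n (3 ^ n * x + r). real j + 1)"
proof -
  let ?phi = "\<lambda>(a, b). a * x + b"
  have sub: "?phi ` Q n n r \<subseteq> Sset n (3 ^ n * x + r)"
    using Q_image[of n n x r] image_in_Sset[OF x4] by auto
  have inj: "inj_on ?phi (Q n n r)"
  proof (rule inj_onI)
    fix p q assume p: "p \<in> Q n n r" and q: "q \<in> Q n n r" and e: "?phi p = ?phi q"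
    obtain a b where ab: "p = (a, b)" by fastforce
    obtain a' b' where ab': "q = (a', b')" by fastforce
    have b: "b < x" "b' < x" using xb p q ab ab' by auto
    have e': "a * x + b = a' * x + b'" using e ab ab' by simp
    have "(a * x + b) div x = a" "(a' * x + b') div x = a'" using b by auto
    then have "a = a'" using e' by metis
    then have "b = b'" using e' by simp
    then show "p = q" using ab ab' \<open>a = a'\<close> by simp
  qed
  have "real x * (\<Sum>p\<in>Q n n r. real (fst p)) = (\<Sum>p\<in>Q n n r. real (fst p) * real x)"
    by (simp add: sum_distrib_left mult.commute)
  also have "\<dots> \<le> (\<Sum>p\<in>Q n n r. real (?phi p) + 1)"
    by (rule sum_mono) (auto split: prod.splits)
  also have "\<dots> = (\<Sum>j\<in>?phi ` Q n n r. real j + 1)"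
    by (subst sum.reindex[OF inj]) simp
  also have "\<dots> \<le> (\<Sum>j\<in>Sset n (3 ^ n * x + r). real j + 1)"
    by (rule sum_mono2[OF Sset_finite sub]) auto
  finally show ?thesis .
qed


lemma aux_sq: "(t::real) \<noteq> 0 \<Longrightarrow> s \<noteq> 0 \<Longrightarrow> p * (t / s)\<^sup>2 / t = p * t / s\<^sup>2"
  by (simp add: power2_eq_square field_simps)

lemma witness:
  assumes Wpos: "0 < (\<Sum>j\<in>Sset n m. real j + 1)"
  shows "\<exists>c. c \<in> Xspace \<and> Xnorm c \<le> 1 \<and>
     Xnorm ((Top ^^ n) c) = sqrt ((\<Sum>j\<in>Sset n m. real j + 1) / (real m + 1))"
proof -
  define S where "S = Sset n m"
  define W where "W = (\<Sum>j\<in>S. real j + 1)"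
  have W0: "0 < W" using Wpos unfolding W_def S_def .
  define s where "s = sqrt (pi * W)"
  have s0: "0 < s" unfolding s_def using W0 by simp
  have s2: "s\<^sup>2 = pi * W" unfolding s_def using W0 by simp
  define c where "c j = (if j \<in> S then complex_of_real ((real j + 1) / s) else 0)" for j
  have fS: "finite S" unfolding S_def by (rule Sset_finite)
  have c0: "\<forall>i<3. c i = 0" unfolding c_def S_def using Sset_ge3 by fastforce
  have cz: "\<And>j. j \<notin> S \<Longrightarrow> pi * (cmod (c j))\<^sup>2 / (real j + 1) = 0" unfolding c_def by simp
  have "summable (\<lambda>j. pi * (cmod (c j))\<^sup>2 / (real j + 1))" by (rule summable_finite[OF fS]) (rule cz)
  then have cX: "c \<in> Xspace" unfolding Xspace_def using c0 by blast
  have "(\<Sum>j. pi * (cmod (c j))\<^sup>2 / (real j + 1)) = (\<Sum>j\<in>S. pi * (cmod (c j))\<^sup>2 / (real j + 1))"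
    by (rule suminf_finite[OF fS cz])
  also have "\<dots> = (\<Sum>j\<in>S. pi * (real j + 1) / s\<^sup>2)"
  proof (rule sum.cong[OF refl])
    fix j assume "j \<in> S"
    then have cj: "c j = complex_of_real ((real j + 1) / s)" unfolding c_def by (simp only: if_True)
    have "cmod (c j) = \<bar>(real j + 1) / s\<bar>" unfolding cj by (rule norm_of_real)
    also have "\<dots> = (real j + 1) / s" using s0 by simp
    finally have "cmod (c j) = (real j + 1) / s" .
    then have "pi * (cmod (c j))\<^sup>2 / (real j + 1) = pi * ((real j + 1) / s)\<^sup>2 / (real j + 1)"
      by simp
    also have "\<dots> = pi * (real j + 1) / s\<^sup>2"
    proof -
      have jp: "real j + 1 \<noteq> 0" by simp
      have sn: "s \<noteq> 0" using s0 by simp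
      show ?thesis using jp sn by (rule aux_sq)
    qed
    finally show "pi * (cmod (c j))\<^sup>2 / (real j + 1) = pi * (real j + 1) / s\<^sup>2" .
  qed
  also have "\<dots> = pi * W / s\<^sup>2" unfolding W_def by (simp add: sum_distrib_left sum_divide_distrib)
  also have "\<dots> = 1" using s2 W0 by simp
  finally have nc: "Xnorm c = 1" unfolding Xnorm_def by simp
  define d where "d = (Top ^^ n) c"
  have dm: "d m' = (\<Sum>j\<in>Sset n m'. c j)" for m' unfolding d_def using Top_pow[OF c0] .
  have dz: "d m' = 0" if "m' \<noteq> m" for m'
  proof -
    have "\<forall>j\<in>Sset n m'. c j = 0" using Sset_disj[OF that, of n] unfolding c_def S_def by auto
    then show ?thesis unfolding dm by simp
  qed
  have dmm: "d m = complex_of_real (W / s)"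
  proof -
    have "d m = (\<Sum>j\<in>S. complex_of_real ((real j + 1) / s))" unfolding dm S_def c_def by simp
    also have "\<dots> = complex_of_real (W / s)" unfolding W_def by (simp add: sum_divide_distrib)
    finally show ?thesis .
  qed
  have gz: "\<And>m'. m' \<notin> {m} \<Longrightarrow> pi * (cmod (d m'))\<^sup>2 / (real m' + 1) = 0" using dz by simp
  have "(\<Sum>m'. pi * (cmod (d m'))\<^sup>2 / (real m' + 1)) = pi * (cmod (d m))\<^sup>2 / (real m + 1)"
    using suminf_finite[of "{m}", OF _ gz] by simp
  also have "\<dots> = pi * (W / s)\<^sup>2 / (real m + 1)"
  proof -
    have "cmod (d m) = \<bar>W / s\<bar>" unfolding dmm by (rule norm_of_real)
    also have "\<dots> = W / s" using W0 s0 by simp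
    finally show ?thesis by simp
  qed
  also have "\<dots> = W / (real m + 1)" using s2 W0 by (simp add: power_divide field_simps power2_eq_square)
  finally have "Xnorm d = sqrt (W / (real m + 1))" unfolding Xnorm_def by simp
  then show ?thesis using cX nc unfolding d_def W_def S_def by auto
qed

theorem proposition4p2:
  fixes n :: nat
  assumes "n \<ge> 1"
  shows "(Top_pow_norm n)\<^sup>2 =
    Max ((\<lambda>r. \<Sum>P\<in>Pset n n r. real_of_rat (coeff P 1) / 3 ^ n) ` {0..3 ^ n - 1})"
proof -
  have fe: "(\<lambda>r. \<Sum>P\<in>Pset n n r. real_of_rat (coeff P 1) / 3 ^ n) = Lf n"
    by (rule ext) (simp add: Lf_def)
  define L where "L = Max (Lf n ` {0..3 ^ n - 1})"
  define Z where "Z = {Xnorm ((Top ^^ n) c) | c. c \<in> Xspace \<and> Xnorm c \<le> 1}"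
  define Sp where "Sp = Sup Z"
  have Sp_def': "Top_pow_norm n = Sp" unfolding Sp_def Z_def Top_pow_norm_def ..
  have ub: "\<forall>z\<in>Z. z \<le> sqrt L" unfolding Z_def L_def using norm_upper by blast
  have bdd: "bdd_above Z" using ub by (auto intro: bdd_aboveI2)
  have zero: "0 \<in> Z"
  proof -
    define c0 where "c0 = (\<lambda>_::nat. 0::complex)"
    have "c0 \<in> Xspace" unfolding Xspace_def c0_def by simp
    moreover have "Xnorm c0 = 0" unfolding Xnorm_def c0_def by simp
    moreover have "(Top ^^ n) c0 = c0" using Top_pow[of c0 n] unfolding c0_def by (auto intro!: ext)
    ultimately show ?thesis unfolding Z_def by force
  qed
  have Sp_le: "Sp \<le> sqrt L" unfolding Sp_def using zero ub by (auto intro!: cSup_least)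
  have Sp0: "0 \<le> Sp" unfolding Sp_def using zero bdd by (rule cSup_upper)
  have L0: "0 \<le> L" unfolding L_def by (rule L_nonneg)
  have "Sp\<^sup>2 \<le> (sqrt L)\<^sup>2" by (rule power_mono[OF Sp_le Sp0])
  then have up: "Sp\<^sup>2 \<le> L" using L0 by simp
  have fin: "finite (Lf n ` {0..3 ^ n - 1})" by simp
  have ne: "Lf n ` {0..3 ^ n - 1} \<noteq> {}" by simp
  have "L \<in> Lf n ` {0..3 ^ n - 1}" unfolding L_def by (rule Max_in[OF fin ne])
  then obtain r where r: "r \<in> {0..3 ^ n - 1}" "Lf n r = L" by blast
  define A where "A = (\<Sum>p\<in>Q n n r. real (fst p))"
  have "A / 3 ^ n = L" using r(2) unfolding A_def Lf_Q by (simp add: sum_divide_distrib[symmetric])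
  moreover have "A = 3 ^ n * (A / 3 ^ n)" by simp
  ultimately have AL: "A = 3 ^ n * L" by simp
  have Apos: "0 < A"
  proof -
    obtain p where "p \<in> Q n n r" using Q_nonempty by blast
    moreover have "\<forall>p\<in>Q n n r. 0 < real (fst p)" using Q_inv[of n n _ _ r] by auto
    ultimately show ?thesis unfolding A_def using Q_finite by (metis sum_pos empty_iff)
  qed
  have low: "L \<le> Sp\<^sup>2"
  proof (rule ccontr)
    assume "\<not> L \<le> Sp\<^sup>2"
    define \<delta> where "\<delta> = L - Sp\<^sup>2"
    have d0: "0 < \<delta>" using \<open>\<not> L \<le> Sp\<^sup>2\<close> unfolding \<delta>_def by simp
    define B where "B = (\<Sum>p\<in>Q n n r. snd p)"
    obtain x0 :: nat where x0: "L * (real r + 1) / \<delta> < real x0" using reals_Archimedean2 by blast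
    define x where "x = x0 + B + 4"
    have x4: "4 \<le> x" unfolding x_def by simp
    have xb: "\<forall>p\<in>Q n n r. snd p < x"
    proof
      fix p assume "p \<in> Q n n r"
      then have "snd p \<le> B" unfolding B_def by (rule member_le_sum) (auto simp: Q_finite)
      then show "snd p < x" unfolding x_def by simp
    qed
    define m where "m = 3 ^ n * x + r"
    define W where "W = (\<Sum>j\<in>Sset n m. real j + 1)"
    have WA: "real x * A \<le> W" unfolding W_def m_def A_def by (rule W_lower[OF x4 xb])
    have "0 < real x * A" using x4 Apos by simp
    then have W0: "0 < W" using WA by linarith
    obtain c where c: "c \<in> Xspace" "Xnorm c \<le> 1" "Xnorm ((Top ^^ n) c) = sqrt (W / (real m + 1))"
      using witness[of n m] W0 unfolding W_def by blast
    have "sqrt (W / (real m + 1)) \<in> Z" unfolding Z_def using c by force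
    then have "sqrt (W / (real m + 1)) \<le> Sp" unfolding Sp_def using bdd by (rule cSup_upper)
    then have "(sqrt (W / (real m + 1)))\<^sup>2 \<le> Sp\<^sup>2" by (rule power_mono) (use W0 in simp)
    then have "W / (real m + 1) \<le> Sp\<^sup>2" using W0 by simp
    define M where "M = real m + 1"
    have M: "M = 3 ^ n * real x + real r + 1" unfolding M_def m_def by simp
    have "real x * 1 \<le> real x * 3 ^ n" by (rule mult_left_mono) simp_all
    then have Mx: "real x \<le> M" unfolding M by (simp add: mult.commute)
    have xpos: "0 < real x" using x4 by simp
    have "real x0 \<le> real x" unfolding x_def by simp
    then have "L * (real r + 1) / \<delta> < real x" using x0 by linarith
    then have "L * (real r + 1) < \<delta> * real x" using d0 by (simp add: field_simps)
    also have "\<dots> \<le> \<delta> * M" using Mx d0 by (simp add: mult_left_mono)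
    finally have key: "L * (real r + 1) < \<delta> * M" .
    have "(L - \<delta>) * M < real x * A"
      using key unfolding AL M by (simp add: algebra_simps)
    then have "L - \<delta> < real x * A / M" using Mx xpos by (simp add: field_simps)
    also have "\<dots> \<le> W / M" using WA Mx xpos by (simp add: divide_right_mono)
    also have "\<dots> \<le> Sp\<^sup>2" using \<open>W / (real m + 1) \<le> Sp\<^sup>2\<close> unfolding M_def .
    finally show False unfolding \<delta>_def by simp
  qed
  have "Sp\<^sup>2 = L" using up low by (rule antisym)
  then show ?thesis unfolding fe Sp_def' L_def .
qed

end
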